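(* Consider the planar system $$\frac{dN}{dt}=rN\left(1-\frac{N}{K}-\frac{h}{w+N}\right)-\frac{aNP}{b+N^2},\qquad \frac{dP}{dt}=\frac{cNP}{b+N^2}-\delta P,$$ where $r,K,h,w,a,b,c,\delta$ are positive constants with $w<K$. Let $D=c^2-4b\delta^2$, $N_4=\frac{c+\sqrt{D}}{2\delta}$, $N_5=\frac{c-\sqrt{D}}{2\delta}$, $N_6=\frac{c}{2\delta}$, and $$P(N)=\frac{r(b+N^2)\left[(K-w)N-K(h-w)-N^2\right]}{Ka(w+N)},$$ and set $E_i=(N_i,P(N_i))$, $i=4,5,6$. Suppose $P(N_4)>0$, $P(N_5)>0$ and $P(N_6)>0$ (for whichever of these are defined). For $i=4,5$ let $$T_i=\frac{hrN_i}{(w+N_i)^2}+\frac{2aP(N_i)N_i^2}{(b+N_i^2)^2}-\frac{rN_i}{K}$$ (the trace of the Jacobian of the system at $E_i$). (i) If $b=\left(\frac{c}{2\delta}\right)^2$, then the coexistence equilibrium point $E_6$ is non-hyperbolic. (ii) If $b<\left(\frac{c}{2\delta}\right)^2$, then the coexistence equilibrium point $E_4$ is unstable; moreover, if $T_4<0$ then $E_4$ is a saddle, and if $T_5<0$ then $E_5$ is locally asymptotically stable.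
   Context: $N(t)$ is the prey density and $P(t)$ the predator density. A coexistence equilibrium is an equilibrium with both coordinates positive. An equilibrium is non-hyperbolic if the Jacobian matrix of the system at it has an eigenvalue with zero real part. *)

theory Defs
  imports "HOL-Analysis.Analysis"
begin

definition pp_field :: "real \<Rightarrow> real \<Rightarrow> real \<Rightarrow> real \<Rightarrow> real \<Rightarrow> real \<Rightarrow> real \<Rightarrow> real
    \<Rightarrow> real \<times> real \<Rightarrow> real \<times> real" where
  "pp_field r K h w a b c \<delta> = (\<lambda>(N, P).
     (r * N * (1 - N / K - h / (w + N)) - a * N * P / (b + N^2),
      c * N * P / (b + N^2) - \<delta> * P))"

text \<open>Prey-nullcline P(N).\<close>
definition Pnull :: "real \<Rightarrow> real \<Rightarrow> real \<Rightarrow> real \<Rightarrow> real \<Rightarrow> real \<Rightarrow> real \<Rightarrow> real" where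
  "Pnull r K h w a b N =
     r * (b + N^2) * ((K - w) * N - K * (h - w) - N^2) / (K * a * (w + N))"

definition Ddisc :: "real \<Rightarrow> real \<Rightarrow> real \<Rightarrow> real" where
  "Ddisc b c \<delta> = c^2 - 4 * b * \<delta>^2"

definition N4 :: "real \<Rightarrow> real \<Rightarrow> real \<Rightarrow> real" where
  "N4 b c \<delta> = (c + sqrt (Ddisc b c \<delta>)) / (2 * \<delta>)"

definition N5 :: "real \<Rightarrow> real \<Rightarrow> real \<Rightarrow> real" where
  "N5 b c \<delta> = (c - sqrt (Ddisc b c \<delta>)) / (2 * \<delta>)"

definition N6 :: "real \<Rightarrow> real \<Rightarrow> real" where
  "N6 c \<delta> = c / (2 * \<delta>)"

definition Tr :: "real \<Rightarrow> real \<Rightarrow> real \<Rightarrow> real \<Rightarrow> real \<Rightarrow> real \<Rightarrow> real \<Rightarrow> real" where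
  "Tr r K h w a b N = h * r * N / (w + N)^2 + 2 * a * Pnull r K h w a b N * N^2 / (b + N^2)^2
                      - r * N / K"

definition is_jacobian ::
  "(real \<times> real \<Rightarrow> real \<times> real) \<Rightarrow> real \<times> real \<Rightarrow> real \<Rightarrow> real \<Rightarrow> real \<Rightarrow> real \<Rightarrow> bool" where
  "is_jacobian F p j11 j12 j21 j22 \<longleftrightarrow>
     (F has_derivative (\<lambda>(u, v). (j11 * u + j12 * v, j21 * u + j22 * v))) (at p)"

definition is_eigenvalue2 :: "real \<Rightarrow> real \<Rightarrow> real \<Rightarrow> real \<Rightarrow> complex \<Rightarrow> bool" where
  "is_eigenvalue2 j11 j12 j21 j22 z \<longleftrightarrow>
     (of_real j11 - z) * (of_real j22 - z) - of_real j12 * of_real j21 = 0"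

definition equilibrium :: "(real \<times> real \<Rightarrow> real \<times> real) \<Rightarrow> real \<times> real \<Rightarrow> bool" where
  "equilibrium F p \<longleftrightarrow> F p = (0, 0)"

definition non_hyperbolic :: "(real \<times> real \<Rightarrow> real \<times> real) \<Rightarrow> real \<times> real \<Rightarrow> bool" where
  "non_hyperbolic F p \<longleftrightarrow> equilibrium F p \<and>
     (\<exists>j11 j12 j21 j22. is_jacobian F p j11 j12 j21 j22 \<and>
        (\<exists>z. is_eigenvalue2 j11 j12 j21 j22 z \<and> Re z = 0))"

definition saddle :: "(real \<times> real \<Rightarrow> real \<times> real) \<Rightarrow> real \<times> real \<Rightarrow> bool" where
  "saddle F p \<longleftrightarrow> equilibrium F p \<and>
     (\<exists>j11 j12 j21 j22. is_jacobian F p j11 j12 j21 j22 \<and>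
        (\<exists>l1 l2 :: real. l1 < 0 \<and> 0 < l2 \<and>
           is_eigenvalue2 j11 j12 j21 j22 (of_real l1) \<and>
           is_eigenvalue2 j11 j12 j21 j22 (of_real l2)))"

definition is_solution :: "(real \<times> real \<Rightarrow> real \<times> real) \<Rightarrow> (real \<Rightarrow> real \<times> real) \<Rightarrow> real \<Rightarrow> bool" where
  "is_solution F x T \<longleftrightarrow>
     (\<forall>t\<in>{0..<T}. (x has_vector_derivative F (x t)) (at t within {0..<T}))"

definition is_global_solution :: "(real \<times> real \<Rightarrow> real \<times> real) \<Rightarrow> (real \<Rightarrow> real \<times> real) \<Rightarrow> bool" where
  "is_global_solution F x \<longleftrightarrow>
     (\<forall>t\<ge>0. (x has_vector_derivative F (x t)) (at t within {0..}))"

definition lyapunov_stable :: "(real \<times> real \<Rightarrow> real \<times> real) \<Rightarrow> real \<times> real \<Rightarrow> bool" where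
  "lyapunov_stable F p \<longleftrightarrow>
     (\<forall>\<epsilon>>0. \<exists>\<eta>>0. \<forall>x T. is_solution F x T \<and> dist (x 0) p < \<eta> \<longrightarrow>
        (\<forall>t\<in>{0..<T}. dist (x t) p < \<epsilon>))"

definition unstable :: "(real \<times> real \<Rightarrow> real \<times> real) \<Rightarrow> real \<times> real \<Rightarrow> bool" where
  "unstable F p \<longleftrightarrow> equilibrium F p \<and> \<not> lyapunov_stable F p"

definition loc_asymp_stable :: "(real \<times> real \<Rightarrow> real \<times> real) \<Rightarrow> real \<times> real \<Rightarrow> bool" where
  "loc_asymp_stable F p \<longleftrightarrow> equilibrium F p \<and> lyapunov_stable F p \<and>
     (\<exists>\<eta>>0. \<forall>x. is_global_solution F x \<and> dist (x 0) p < \<eta> \<longrightarrow>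
        (x \<longlongrightarrow> p) at_top)"

end

theory Submission
  imports Defs
begin

lemma deriv_lower:
  fixes g g' :: "real \<Rightarrow> real"
  assumes ab: "a \<le> b"
    and d: "\<And>s. s \<in> {a..b} \<Longrightarrow> (g has_real_derivative g' s) (at s within {a..b})"
    and k: "\<And>s. s \<in> {a..b} \<Longrightarrow> g' s \<ge> k"
  shows "g b - g a \<ge> k * (b - a)"
proof (cases "a = b")
  case True then show ?thesis by simp
next
  case False
  then have "a < b" using ab by simp
  have cont: "continuous_on {a..b} g"
    using d by (meson DERIV_continuous continuous_on_eq_continuous_within)
  have dd: "\<And>x. a < x \<Longrightarrow> x < b \<Longrightarrow> (g has_derivative (\<lambda>h. g' x * h)) (at x)"
  proof -
    fix x assume "a < x" "x < b"
    then have "(g has_real_derivative g' x) (at x)"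
      using d[of x] by (simp add: at_within_Icc_at)
    then show "(g has_derivative (\<lambda>h. g' x * h)) (at x)"
      by (simp add: has_field_derivative_def)
  qed
  obtain \<xi> where xi: "a < \<xi>" "\<xi> < b" "g b - g a = g' \<xi> * (b - a)"
    using mvt[OF \<open>a < b\<close> cont dd] by blast
  have "g' \<xi> \<ge> k" using k xi by auto
  then show ?thesis using xi \<open>a < b\<close> by (simp add: mult_right_mono)
qed


lemma picard_step:
  fixes G :: "'a::banach \<Rightarrow> 'a"
  assumes lip: "\<And>x y. norm (G x - G y) \<le> L * norm (x - y)" and L: "L > 0"
  shows "\<exists>y. y 0 = x0 \<and> (\<forall>t\<in>{0..1/(2*L)}. (y has_vector_derivative G (y t)) (at t within {0..1/(2*L)}))"
proof -
  define h where "h = 1/(2*L)"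
  have h: "h > 0" "L * h = 1/2" using L by (auto simp: h_def)
  have contG: "continuous_on UNIV G"
    by (rule lipschitz_on_continuous_on[of L]) (rule lipschitz_onI, use lip L in \<open>auto simp: dist_norm\<close>)
  define cl where "cl t = max 0 (min h t)" for t :: real
  have cl: "cl t \<in> {0..h}" for t using h by (auto simp: cl_def)
  have contcl: "continuous_on UNIV cl" unfolding cl_def by (intro continuous_intros)
  have contGf: "continuous_on S (\<lambda>s. G (apply_bcontfun f s))" for f :: "real \<Rightarrow>\<^sub>C 'a" and S
    by (rule continuous_on_compose2[OF contG]) auto
  define I where "I f t = x0 + integral {0..cl t} (\<lambda>s. G (apply_bcontfun f s))" for f t
  have inbc: "I f \<in> bcontfun" for f
  proof (rule bcontfun_normI)
    have c1: "continuous_on {0..h} (\<lambda>u. integral {0..u} (\<lambda>s. G (apply_bcontfun f s)))"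
      by (rule indefinite_integral_continuous_1, rule integrable_continuous_interval, rule contGf)
    have "continuous_on UNIV (\<lambda>t. integral {0..cl t} (\<lambda>s. G (apply_bcontfun f s)))"
      by (rule continuous_on_compose2[OF c1 contcl]) (use cl in auto)
    then show "continuous_on UNIV (I f)" unfolding I_def by (intro continuous_intros)
  next
    fix t
    define B where "B = norm (G 0) + L * norm f"
    have bnd: "norm (G (apply_bcontfun f s)) \<le> B" for s
    proof -
      have "norm (G (apply_bcontfun f s)) \<le> norm (G 0) + norm (G (apply_bcontfun f s) - G 0)"
        by (metis add.commute diff_add_cancel norm_triangle_ineq)
      also have "\<dots> \<le> norm (G 0) + L * norm (apply_bcontfun f s)" using lip[of "apply_bcontfun f s" 0] by simp
      also have "\<dots> \<le> B" unfolding B_def using norm_bounded[of f s] L by (simp add: mult_left_mono)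
      finally show ?thesis .
    qed
    have B0: "B \<ge> 0" unfolding B_def using L by simp
    have "norm (integral {0..cl t} (\<lambda>s. G (apply_bcontfun f s))) \<le> B * (cl t - 0)"
      by (rule integral_bound) (use cl[of t] bnd contGf in auto)
    also have "\<dots> \<le> B * h" using cl[of t] B0 by (simp add: mult_left_mono)
    finally have "norm (integral {0..cl t} (\<lambda>s. G (apply_bcontfun f s))) \<le> B * h" .
    then show "norm (I f t) \<le> norm x0 + B * h" unfolding I_def
      by (meson add_left_mono norm_triangle_ineq order_trans)
  qed
  define \<Phi> where "\<Phi> f = Bcontfun (I f)" for f
  have app: "apply_bcontfun (\<Phi> f) = I f" for f unfolding \<Phi>_def using inbc by (simp add: Bcontfun_inverse)
  have contr: "dist (\<Phi> f) (\<Phi> g) \<le> (1/2) * dist f g" for f g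
  proof (rule dist_bound)
    fix t
    have eq: "I f t - I g t = integral {0..cl t} (\<lambda>s. G (apply_bcontfun f s) - G (apply_bcontfun g s))"
      unfolding I_def
      by (simp add: integral_diff integrable_continuous_interval contGf)
    have "norm (integral {0..cl t} (\<lambda>s. G (apply_bcontfun f s) - G (apply_bcontfun g s))) \<le> (L * dist f g) * (cl t - 0)"
    proof (rule integral_bound)
      show "0 \<le> cl t" using cl[of t] by simp
      show "continuous_on {0..cl t} (\<lambda>s. G (apply_bcontfun f s) - G (apply_bcontfun g s))"
        by (intro continuous_intros contGf)
      fix s
      have "norm (G (apply_bcontfun f s) - G (apply_bcontfun g s)) \<le> L * dist (apply_bcontfun f s) (apply_bcontfun g s)"
        using lip by (simp add: dist_norm)
      also have "\<dots> \<le> L * dist f g" using dist_bounded[of f s g] L by (simp add: mult_left_mono)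
      finally show "norm (G (apply_bcontfun f s) - G (apply_bcontfun g s)) \<le> L * dist f g" .
    qed
    also have "\<dots> \<le> (L * dist f g) * h" using cl[of t] L by (simp add: mult_left_mono)
    also have "\<dots> = (1/2) * dist f g" using h by (simp add: algebra_simps)
    finally show "dist (apply_bcontfun (\<Phi> f) t) (apply_bcontfun (\<Phi> g) t) \<le> (1/2) * dist f g"
      by (simp add: app dist_norm eq)
  qed
  obtain y where y: "\<Phi> y = y"
    using banach_fix_type[of "1/2" \<Phi>] contr by auto
  have yeq: "apply_bcontfun y t = x0 + integral {0..t} (\<lambda>s. G (apply_bcontfun y s))" if "t \<in> {0..h}" for t
  proof -
    have "apply_bcontfun y t = I y t" using y app by metis
    also have "cl t = t" using that by (auto simp: cl_def)
    ultimately show ?thesis unfolding I_def by simp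
  qed
  have der: "(apply_bcontfun y has_vector_derivative G (apply_bcontfun y t)) (at t within {0..h})"
    if t: "t \<in> {0..h}" for t
  proof -
    have "((\<lambda>u. integral {0..u} (\<lambda>s. G (apply_bcontfun y s))) has_vector_derivative G (apply_bcontfun y t)) (at t within {0..h})"
      by (rule integral_has_vector_derivative[OF contGf t])
    then have "((\<lambda>u. x0 + integral {0..u} (\<lambda>s. G (apply_bcontfun y s))) has_vector_derivative G (apply_bcontfun y t)) (at t within {0..h})"
      by (intro derivative_eq_intros) auto
    then show ?thesis
      by (rule has_vector_derivative_transform_within[where d=1]) (use t yeq in auto)
  qed
  have "apply_bcontfun y 0 = x0" using yeq[of 0] h by simp
  then show ?thesis using der unfolding h_def by blast
qed

lemma hvd_not_limpt:
  assumes "\<not> t islimpt S"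
  shows "(f has_vector_derivative v) (at t within S)"
proof -
  have "at t within S = bot" using assms trivial_limit_within[of t S] by (simp add: trivial_limit_def)
  then show ?thesis
    by (simp add: has_vector_derivative_def has_derivative_def bounded_linear_scaleR_left)
qed

lemma hvd_union:
  assumes "(f has_vector_derivative v) (at t within S)" "(f has_vector_derivative v) (at t within U)"
  shows "(f has_vector_derivative v) (at t within S \<union> U)"
proof -
  note a = assms[unfolded has_vector_derivative_def has_derivative_within]
  have "(f has_derivative (\<lambda>x. x *\<^sub>R v)) (at t within S \<union> U)"
    apply (subst has_derivative_within)
    using a by (auto simp: at_within_union intro: filterlim_sup)
  then show ?thesis by (simp add: has_vector_derivative_def)
qed


lemma closed_not_limpt: "closed S \<Longrightarrow> t \<notin> S \<Longrightarrow> \<not> t islimpt S"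
  using closed_limpt by blast

lemma glue:
  fixes y z :: "real \<Rightarrow> 'a::real_normed_vector"
  assumes a: "a \<ge> 0" and h: "h \<ge> 0"
    and dy: "\<forall>t\<in>{0..a}. (y has_vector_derivative G (y t)) (at t within {0..a})"
    and dz: "\<forall>t\<in>{0..h}. (z has_vector_derivative G (z t)) (at t within {0..h})"
    and z0: "z 0 = y a"
  shows "\<forall>t\<in>{0..a+h}. ((\<lambda>t. if t \<le> a then y t else z (t - a)) has_vector_derivative
            G (if t \<le> a then y t else z (t - a))) (at t within {0..a+h})"
proof
  fix t assume t: "t \<in> {0..a+h}"
  define w where "w = (\<lambda>t. if t \<le> a then y t else z (t - a))"
  have wt: "w t = (if t \<le> a then y t else z (t - a))" by (simp add: w_def)
  have D1: "(w has_vector_derivative G (w t)) (at t within {0..a})"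
  proof (cases "t \<le> a")
    case True
    then have "(y has_vector_derivative G (y t)) (at t within {0..a})" using dy t by auto
    then have "(w has_vector_derivative G (y t)) (at t within {0..a})"
      by (rule has_vector_derivative_transform_within[where d=1]) (use True t in \<open>auto simp: w_def\<close>)
    then show ?thesis using True by (simp add: w_def)
  next
    case False
    then show ?thesis by (intro hvd_not_limpt closed_not_limpt) auto
  qed
  have D2: "(w has_vector_derivative G (w t)) (at t within {a..a+h})"
  proof (cases "t \<ge> a")
    case True
    have e1: "((\<lambda>s. s - a) has_vector_derivative 1) (at t within {a..a+h})"
      by (auto intro!: derivative_eq_intros)
    have im: "(\<lambda>s. s - a) ` {a..a+h} = {0..h}"
      by (auto simp: image_iff intro!: bexI[where x="_ + a"])
    have "(z has_vector_derivative G (z (t - a))) (at ((\<lambda>s. s - a) t) within (\<lambda>s. s - a) ` {a..a+h})"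
      using dz True t unfolding im by auto
    from vector_diff_chain_within[OF e1 this]
    have "((\<lambda>s. z (s - a)) has_vector_derivative G (z (t - a))) (at t within {a..a+h})"
      by (simp add: o_def)
    then have "(w has_vector_derivative G (z (t - a))) (at t within {a..a+h})"
      by (rule has_vector_derivative_transform_within[where d=1]) (use True t z0 in \<open>auto simp: w_def\<close>)
    then show ?thesis using True z0 by (auto simp: w_def)
  next
    case False
    then show ?thesis by (intro hvd_not_limpt closed_not_limpt) auto
  qed
  have "{0..a+h} = {0..a} \<union> {a..a+h}" using a h by auto
  then show "((\<lambda>t. if t \<le> a then y t else z (t - a)) has_vector_derivative
            G (if t \<le> a then y t else z (t - a))) (at t within {0..a+h})"
    using hvd_union[OF D1 D2] by (simp add: w_def)
qed

lemma picard_n: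
  fixes G :: "'a::banach \<Rightarrow> 'a"
  assumes lip: "\<And>x y. norm (G x - G y) \<le> L * norm (x - y)" and L: "L > 0"
  shows "\<exists>y. y 0 = x0 \<and> (\<forall>t\<in>{0..real (Suc n) * (1/(2*L))}.
            (y has_vector_derivative G (y t)) (at t within {0..real (Suc n) * (1/(2*L))}))"
proof (induction n arbitrary: x0)
  case 0
  then show ?case using picard_step[OF lip L, of x0] by simp
next
  case (Suc n)
  define h where "h = 1/(2*L)"
  have h: "h > 0" using L by (simp add: h_def)
  obtain y where y: "y 0 = x0" "\<forall>t\<in>{0..real (Suc n) * h}. (y has_vector_derivative G (y t)) (at t within {0..real (Suc n) * h})"
    using Suc.IH[of x0] unfolding h_def by blast
  obtain z where z: "z 0 = y (real (Suc n) * h)" "\<forall>t\<in>{0..h}. (z has_vector_derivative G (z t)) (at t within {0..h})"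
    using picard_step[OF lip L, of "y (real (Suc n) * h)"] unfolding h_def by blast
  have g: "\<forall>t\<in>{0..real (Suc n) * h + h}. ((\<lambda>t. if t \<le> real (Suc n) * h then y t else z (t - real (Suc n) * h)) has_vector_derivative
            G (if t \<le> real (Suc n) * h then y t else z (t - real (Suc n) * h))) (at t within {0..real (Suc n) * h + h})"
    by (rule glue) (use h y z in auto)
  have e: "real (Suc n) * h + h = real (Suc (Suc n)) * h" by (simp add: algebra_simps)
  have g2: "\<forall>t\<in>{0..real (Suc (Suc n)) * h}. ((\<lambda>t. if t \<le> real (Suc n) * h then y t else z (t - real (Suc n) * h)) has_vector_derivative
            G ((\<lambda>t. if t \<le> real (Suc n) * h then y t else z (t - real (Suc n) * h)) t)) (at t within {0..real (Suc (Suc n)) * h})"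
    using g unfolding e by simp
  have "\<exists>y. y 0 = x0 \<and> (\<forall>t\<in>{0..real (Suc (Suc n)) * h}.
            (y has_vector_derivative G (y t)) (at t within {0..real (Suc (Suc n)) * h}))"
    apply (rule exI[where x="\<lambda>t. if t \<le> real (Suc n) * h then y t else z (t - real (Suc n) * h)"])
    using g2 h y by auto
  then show ?case unfolding h_def by blast
qed

lemma ode_exists:
  fixes G :: "'a::banach \<Rightarrow> 'a"
  assumes lip: "\<And>x y. norm (G x - G y) \<le> L * norm (x - y)" and L: "L > 0"
  shows "\<exists>y. y 0 = x0 \<and> (\<forall>t\<in>{0..T}. (y has_vector_derivative G (y t)) (at t within {0..T}))"
proof -
  define h where "h = 1/(2*L)"
  have h: "h > 0" using L by (simp add: h_def)
  define n where "n = nat \<lceil>T / h\<rceil>"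
  have "T / h \<le> real n" unfolding n_def by linarith
  then have Tn: "T \<le> real (Suc n) * h" using h by (simp add: field_simps)
  obtain y where y: "y 0 = x0" "\<forall>t\<in>{0..real (Suc n) * h}. (y has_vector_derivative G (y t)) (at t within {0..real (Suc n) * h})"
    using picard_n[OF lip L, of x0 n] unfolding h_def by blast
  show ?thesis
  proof (intro exI conjI ballI)
    show "y 0 = x0" by fact
    fix t assume t: "t \<in> {0..T}"
    show "(y has_vector_derivative G (y t)) (at t within {0..T})"
      by (rule has_vector_derivative_within_subset[where S="{0..real (Suc n) * h}"]) (use y t Tn in auto)
  qed
qed


definition qf :: "real \<Rightarrow> real \<Rightarrow> real \<Rightarrow> real \<times> real \<Rightarrow> real" where
  "qf al q ga y = al * (fst y)^2 + 2 * q * (fst y * snd y) + ga * (snd y)^2"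

definition bf :: "real \<Rightarrow> real \<Rightarrow> real \<Rightarrow> real \<times> real \<Rightarrow> real \<times> real \<Rightarrow> real" where
  "bf al q ga y z = al * fst y * fst z + q * (fst y * snd z + snd y * fst z) + ga * snd y * snd z"

definition linJ :: "real \<Rightarrow> real \<Rightarrow> real \<Rightarrow> real \<Rightarrow> real \<times> real \<Rightarrow> real \<times> real" where
  "linJ j11 j12 j21 j22 y = (j11 * fst y + j12 * snd y, j21 * fst y + j22 * snd y)"

lemma nsq: "(norm (y :: real \<times> real))^2 = (fst y)^2 + (snd y)^2"
  by (cases y) (simp add: norm_Pair)

lemma fst_le: "\<bar>fst (y :: real \<times> real)\<bar> \<le> norm y"
proof -
  have "(fst y)^2 \<le> (norm y)^2" by (simp add: nsq)
  then show ?thesis using abs_le_square_iff[of "fst y" "norm y"] by simp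
qed

lemma snd_le: "\<bar>snd (y :: real \<times> real)\<bar> \<le> norm y"
proof -
  have "(snd y)^2 \<le> (norm y)^2" by (simp add: nsq)
  then show ?thesis using abs_le_square_iff[of "snd y" "norm y"] by simp
qed

lemma tri3: "\<bar>(x::real) + y + z\<bar> \<le> \<bar>x\<bar> + \<bar>y\<bar> + \<bar>z\<bar>"
  using abs_triangle_ineq[of "x + y" z] abs_triangle_ineq[of x y] by linarith

lemma bf_bound: "\<bar>bf al q ga y z\<bar> \<le> (\<bar>al\<bar> + 2 * \<bar>q\<bar> + \<bar>ga\<bar>) * norm y * norm z"
proof -
  have a: "\<bar>fst y * fst z\<bar> \<le> norm y * norm z" "\<bar>fst y * snd z\<bar> \<le> norm y * norm z"
          "\<bar>snd y * fst z\<bar> \<le> norm y * norm z" "\<bar>snd y * snd z\<bar> \<le> norm y * norm z"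
    by (simp_all add: abs_mult mult_mono' fst_le snd_le)
  have e: "bf al q ga y z = al * (fst y * fst z) + q * (fst y * snd z + snd y * fst z) + ga * (snd y * snd z)"
    unfolding bf_def by (simp add: algebra_simps)
  have b: "\<bar>fst y * snd z + snd y * fst z\<bar> \<le> \<bar>fst y * snd z\<bar> + \<bar>snd y * fst z\<bar>"
    by (rule abs_triangle_ineq)
  have "\<bar>bf al q ga y z\<bar> \<le> \<bar>al\<bar> * \<bar>fst y * fst z\<bar> + \<bar>q\<bar> * \<bar>fst y * snd z + snd y * fst z\<bar> + \<bar>ga\<bar> * \<bar>snd y * snd z\<bar>"
    unfolding e using tri3 by (metis abs_mult)
  also have "\<dots> \<le> \<bar>al\<bar> * (norm y * norm z) + \<bar>q\<bar> * (norm y * norm z + norm y * norm z) + \<bar>ga\<bar> * (norm y * norm z)"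
    using a b by (intro add_mono mult_left_mono) auto
  finally show ?thesis by (simp add: algebra_simps)
qed

lemma two_uv: "2 * \<bar>(u::real) * v\<bar> \<le> u^2 + v^2"
proof -
  have "0 \<le> (\<bar>u\<bar> - \<bar>v\<bar>)^2" by simp
  then show ?thesis by (simp add: power2_eq_square algebra_simps abs_mult)
qed

lemma qf_upper: "qf al q ga y \<le> (\<bar>al\<bar> + \<bar>q\<bar> + \<bar>ga\<bar>) * (norm y)^2"
proof -
  have "2 * q * (fst y * snd y) \<le> \<bar>q\<bar> * ((fst y)^2 + (snd y)^2)"
  proof -
    have "2 * q * (fst y * snd y) \<le> \<bar>q\<bar> * (2 * \<bar>fst y * snd y\<bar>)"
      by (simp add: abs_mult) (metis abs_ge_self abs_mult abs_of_nonneg mult.assoc mult_2 zero_le_numeral abs_mult_pos)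
    also have "\<dots> \<le> \<bar>q\<bar> * ((fst y)^2 + (snd y)^2)" by (rule mult_left_mono[OF two_uv]) simp
    finally show ?thesis .
  qed
  moreover have "al * (fst y)^2 \<le> \<bar>al\<bar> * (fst y)^2" "ga * (snd y)^2 \<le> \<bar>ga\<bar> * (snd y)^2"
    by (simp_all add: mult_right_mono)
  moreover have "0 \<le> \<bar>al\<bar> * (snd y)^2" "0 \<le> \<bar>ga\<bar> * (fst y)^2"
    by simp_all
  moreover have "qf al q ga y = al*(fst y)^2 + 2*q*(fst y * snd y) + ga*(snd y)^2" by (simp add: qf_def)
  moreover have "(\<bar>al\<bar> + \<bar>q\<bar> + \<bar>ga\<bar>) * (norm y)^2 = \<bar>al\<bar>*(fst y)^2 + \<bar>al\<bar>*(snd y)^2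
     + \<bar>q\<bar> * ((fst y)^2 + (snd y)^2) + \<bar>ga\<bar>*(fst y)^2 + \<bar>ga\<bar>*(snd y)^2"
    by (simp add: nsq algebra_simps)
  ultimately show ?thesis by linarith
qed

lemma qf_lower:
  assumes "al > 0" "al * ga - q^2 > 0"
  shows "(al * ga - q^2) / (al + ga) * (norm y)^2 \<le> qf al q ga y"
proof -
  have ga: "ga > 0"
  proof (rule ccontr)
    assume "\<not> ga > 0"
    then have "al * ga \<le> 0" using assms(1) by (simp add: mult_nonneg_nonpos)
    then show False using assms(2) by (smt (verit) zero_le_power2)
  qed
  have "(al + ga) * qf al q ga y - (al * ga - q^2) * ((fst y)^2 + (snd y)^2)
        = (al * fst y + q * snd y)^2 + (q * fst y + ga * snd y)^2"
    unfolding qf_def by (simp add: power2_eq_square algebra_simps)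
  then have "(al * ga - q^2) * (norm y)^2 \<le> (al + ga) * qf al q ga y"
    unfolding nsq by (smt (verit) zero_le_power2 [of "al * fst y + q * snd y"] zero_le_power2 [of "q * fst y + ga * snd y"])
  then show ?thesis using assms ga by (simp add: field_simps)
qed

lemma qf_scale: "qf al q ga (s *\<^sub>R v) = s^2 * qf al q ga v"
  unfolding qf_def by (simp add: power2_eq_square algebra_simps)

lemma bf_diff: "bf al q ga y z - bf al q ga y z' = bf al q ga y (z - z')"
  unfolding bf_def by (simp add: algebra_simps)

lemma qf_deriv:
  assumes "(x has_vector_derivative v) (at t within S)"
  shows "((\<lambda>t. qf al q ga (x t - p)) has_real_derivative 2 * bf al q ga (x t - p) v) (at t within S)"
proof -
  have d: "(x has_derivative (\<lambda>h. h *\<^sub>R v)) (at t within S)" using assms by (simp add: has_vector_derivative_def)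
  have d1': "((\<lambda>t. fst (x t)) has_real_derivative fst v) (at t within S)"
    unfolding has_field_derivative_def
    by (rule has_derivative_eq_rhs[OF has_derivative_fst[OF d]]) (auto simp: fun_eq_iff)
  have d2': "((\<lambda>t. snd (x t)) has_real_derivative snd v) (at t within S)"
    unfolding has_field_derivative_def
    by (rule has_derivative_eq_rhs[OF has_derivative_snd[OF d]]) (auto simp: fun_eq_iff)
  have d1: "((\<lambda>t. fst (x t) - fst p) has_real_derivative fst v) (at t within S)"
    using DERIV_diff[OF d1' DERIV_const[of "fst p"]] by simp
  have d2: "((\<lambda>t. snd (x t) - snd p) has_real_derivative snd v) (at t within S)"
    using DERIV_diff[OF d2' DERIV_const[of "snd p"]] by simp
  have "((\<lambda>t. al * (fst (x t) - fst p)^2 + 2 * q * ((fst (x t) - fst p) * (snd (x t) - snd p)) + ga * (snd (x t) - snd p)^2)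
      has_real_derivative 2 * bf al q ga (x t - p) v) (at t within S)"
    by (rule derivative_eq_intros d1 d2 refl | simp)+ (simp add: bf_def algebra_simps)
  then show ?thesis unfolding qf_def by simp
qed

lemma jac_remainder:
  assumes jac: "is_jacobian F p j11 j12 j21 j22" and eq: "F p = (0,0)" and k: "\<kappa> > 0"
  shows "\<exists>\<rho>>0. \<forall>y. norm y < \<rho> \<longrightarrow> norm (F (p + y) - linJ j11 j12 j21 j22 y) \<le> \<kappa> * norm y"
proof -
  have "(F has_derivative (\<lambda>(u, v). (j11 * u + j12 * v, j21 * u + j22 * v))) (at p within UNIV)"
    using jac by (simp add: is_jacobian_def)
  then obtain d where d: "d > 0" "\<forall>z\<in>UNIV. norm (z - p) < d \<longrightarrow>
      norm (F z - F p - (\<lambda>(u, v). (j11 * u + j12 * v, j21 * u + j22 * v)) (z - p)) \<le> \<kappa> * norm (z - p)"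
    unfolding has_derivative_within_alt using k by blast
  show ?thesis
  proof (intro exI conjI allI impI)
    show "d > 0" by fact
    fix y :: "real \<times> real" assume "norm y < d"
    then show "norm (F (p + y) - linJ j11 j12 j21 j22 y) \<le> \<kappa> * norm y"
      using d(2)[rule_format, of "p + y"] eq by (cases y) (simp add: linJ_def zero_prod_def[symmetric])
  qed
qed


lemma deriv_lower2:
  fixes g g' :: "real \<Rightarrow> real"
  assumes ab: "a \<le> b"
    and d: "\<And>s. s \<in> {a..b} \<Longrightarrow> (g has_real_derivative g' s) (at s within {a..b})"
    and k: "\<And>s. a < s \<Longrightarrow> s < b \<Longrightarrow> g' s \<ge> k"
  shows "g b - g a \<ge> k * (b - a)"
proof (cases "a = b")
  case True then show ?thesis by simp
next
  case False
  then have "a < b" using ab by simp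
  have cont: "continuous_on {a..b} g"
    using d by (meson DERIV_continuous continuous_on_eq_continuous_within)
  have dd: "\<And>x. a < x \<Longrightarrow> x < b \<Longrightarrow> (g has_derivative (\<lambda>h. g' x * h)) (at x)"
  proof -
    fix x assume "a < x" "x < b"
    then have "(g has_real_derivative g' x) (at x)"
      using d[of x] by (simp add: at_within_Icc_at)
    then show "(g has_derivative (\<lambda>h. g' x * h)) (at x)"
      by (simp add: has_field_derivative_def)
  qed
  obtain \<xi> where xi: "a < \<xi>" "\<xi> < b" "g b - g a = g' \<xi> * (b - a)"
    using mvt[OF \<open>a < b\<close> cont dd] by blast
  have "g' \<xi> \<ge> k" using k xi by auto
  then show ?thesis using xi \<open>a < b\<close> by (simp add: mult_right_mono)
qed

lemma barrier:
  fixes g g' :: "real \<Rightarrow> real"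
  assumes d: "\<And>t. t \<in> {0..<T} \<Longrightarrow> (g has_real_derivative g' t) (at t within {0..<T})"
    and g0: "g 0 < c"
    and neg: "\<And>t. t \<in> {0..<T} \<Longrightarrow> g t < c \<Longrightarrow> g' t \<le> 0"
    and t2: "t2 \<in> {0..<T}"
  shows "g t2 \<le> g 0"
proof -
  have dsub: "\<And>s. s \<in> {0..t'} \<Longrightarrow> (g has_real_derivative g' s) (at s within {0..t'})"
    if "t' \<in> {0..<T}" for t'
    using that by (intro DERIV_subset[OF d]) auto
  have key: "g t' \<le> g 0" if t': "t' \<in> {0..<T}" and below: "\<And>s. 0 \<le> s \<Longrightarrow> s < t' \<Longrightarrow> g s < c" for t'
  proof -
    have "(-g t') - (-g 0) \<ge> 0 * (t' - 0)"
    proof (rule deriv_lower2[where g'="\<lambda>s. - g' s"])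
      show "0 \<le> t'" using t' by simp
      fix s assume "s \<in> {0..t'}"
      then show "((\<lambda>s. - g s) has_real_derivative - g' s) (at s within {0..t'})"
        using dsub[OF t'] by (intro DERIV_minus) auto
    next
      fix s assume "0 < s" "s < t'"
      then show "0 \<le> - g' s" using neg[of s] below[of s] t' by auto
    qed
    then show ?thesis by simp
  qed
  define A where "A = {s \<in> {0..t2}. (\<lambda>_. c) s \<le> g s}"
  show ?thesis
  proof (cases "A = {}")
    case True
    show ?thesis
    proof (rule key[OF t2])
      fix s assume s: "0 \<le> s" "s < t2"
      then have "s \<notin> A" using True by simp
      then show "g s < c" using s by (auto simp: A_def)
    qed
  next
    case False
    have cont: "continuous_on {0..t2} g"
      using dsub[OF t2] by (meson DERIV_continuous continuous_on_eq_continuous_within)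
    have cl: "closed A" unfolding A_def
      by (rule continuous_on_closed_Collect_le[OF continuous_on_const cont closed_atLeastAtMost])
    have bdd: "bdd_below A" unfolding A_def by (rule bdd_belowI[where m=0]) auto
    have t1A: "Inf A \<in> A" by (rule closed_contains_Inf[OF False bdd cl])
    have below: "g s < c" if "0 \<le> s" "s < Inf A" for s
    proof (rule ccontr)
      assume "\<not> g s < c"
      then have "s \<in> A" using that t1A by (auto simp: A_def)
      then have "Inf A \<le> s" by (rule cInf_lower[OF _ bdd])
      then show False using that by simp
    qed
    have "Inf A \<in> {0..<T}" using t1A t2 by (auto simp: A_def)
    from key[OF this below] have "g (Inf A) \<le> g 0" by auto
    moreover have "c \<le> g (Inf A)" using t1A by (simp add: A_def)
    ultimately show ?thesis using g0 by simp
  qed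
qed

lemma ga_pos: "al > 0 \<Longrightarrow> al * ga - q^2 > 0 \<Longrightarrow> (ga::real) > 0"
proof (rule ccontr)
  assume a: "al > 0" "al * ga - q^2 > 0" "\<not> ga > 0"
  then have "al * ga \<le> 0" by (simp add: mult_nonneg_nonpos)
  then show False using a(2) by (smt (verit) zero_le_power2)
qed

lemma exp_decay: fixes r K :: real shows "r > 0 \<Longrightarrow> ((\<lambda>t. K * exp (- (r * t))) \<longlongrightarrow> 0) at_top"
proof -
  assume r: "r > 0"
  have "filterlim (\<lambda>t::real. r * t) at_top at_top"
    using filterlim_tendsto_pos_mult_at_top[OF tendsto_const r filterlim_ident] .
  then have "filterlim (\<lambda>t::real. - (r * t)) at_bot at_top"
    by (simp add: filterlim_uminus_at_bot)
  then have "((\<lambda>t. exp (- (r * t))) \<longlongrightarrow> 0) at_top"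
    by (rule filterlim_compose[OF exp_at_bot])
  then show ?thesis using tendsto_mult_right_zero by (metis mult_zero_right tendsto_mult_left_zero tendsto_const tendsto_mult)
qed


lemma rate_bound:
  assumes rem: "norm (R :: real \<times> real) \<le> \<kappa> * norm y" and k: "\<kappa> = mu / (4 * C)"
    and C: "C = \<bar>al\<bar> + 2 * \<bar>q\<bar> + \<bar>ga\<bar> + 1" and mu: "mu > 0"
  shows "\<bar>2 * bf al q ga y R\<bar> \<le> (mu/2) * (norm y)^2"
proof -
  have Cp: "C > 0" using C by simp
  have "\<bar>bf al q ga y R\<bar> \<le> (\<bar>al\<bar> + 2 * \<bar>q\<bar> + \<bar>ga\<bar>) * norm y * norm R" by (rule bf_bound)
  also have "\<dots> \<le> C * norm y * norm R" using C by (simp add: mult_right_mono)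
  also have "\<dots> \<le> C * norm y * (\<kappa> * norm y)" using rem Cp by (simp add: mult_left_mono)
  also have "\<dots> = (mu/4) * (norm y)^2" using Cp k by (simp add: power2_eq_square field_simps)
  finally show ?thesis by simp
qed

lemma stab_abstract:
  assumes eq: "F p = (0,0)" and jac: "is_jacobian F p j11 j12 j21 j22"
    and al: "al > 0" and De: "al * ga - q^2 > 0" and mu: "mu > 0"
    and neg: "\<And>y. 2 * bf al q ga y (linJ j11 j12 j21 j22 y) \<le> - mu * (norm y)^2"
  shows "loc_asymp_stable F p"
proof -
  have ga: "ga > 0" using ga_pos[OF al De] .
  define m where "m = (al * ga - q^2) / (al + ga)"
  define M where "M = \<bar>al\<bar> + \<bar>q\<bar> + \<bar>ga\<bar>"
  have m: "m > 0" unfolding m_def using De al ga by simp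
  have M: "M > 0" unfolding M_def using al by simp
  have lowQ: "m * (norm y)^2 \<le> qf al q ga y" for y unfolding m_def by (rule qf_lower[OF al De])
  have upQ: "qf al q ga y \<le> M * (norm y)^2" for y unfolding M_def by (rule qf_upper)
  have mM: "m \<le> M" using lowQ[of "(1,0)"] upQ[of "(1,0)"] by simp
  have Qnn: "qf al q ga y \<ge> 0" for y using lowQ[of y] m by (smt (verit) zero_le_power2 mult_nonneg_nonneg)
  define C where "C = \<bar>al\<bar> + 2 * \<bar>q\<bar> + \<bar>ga\<bar> + 1"
  define \<kappa> where "\<kappa> = mu / (4 * C)"
  have kp: "\<kappa> > 0" unfolding \<kappa>_def C_def using mu by simp
  obtain \<rho> where \<rho>: "\<rho> > 0" "\<And>y. norm y < \<rho> \<Longrightarrow> norm (F (p + y) - linJ j11 j12 j21 j22 y) \<le> \<kappa> * norm y"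
    using jac_remainder[OF jac eq kp] by blast
  have rate: "2 * bf al q ga y (F (p + y)) \<le> - (mu/2) * (norm y)^2" if "norm y < \<rho>" for y
  proof -
    have "2 * bf al q ga y (F (p + y)) = 2 * bf al q ga y (linJ j11 j12 j21 j22 y)
          + 2 * bf al q ga y (F (p + y) - linJ j11 j12 j21 j22 y)"
      using bf_diff[of al q ga y "F (p + y)" "linJ j11 j12 j21 j22 y"] by simp
    moreover have "\<bar>2 * bf al q ga y (F (p + y) - linJ j11 j12 j21 j22 y)\<bar> \<le> (mu/2) * (norm y)^2"
      by (rule rate_bound[OF \<rho>(2)[OF that] \<kappa>_def C_def mu])
    ultimately show ?thesis using neg[of y] by linarith
  qed
  define r where "r = mu / (4 * M)"
  have r: "r > 0" unfolding r_def using mu M by simp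
  have core: "qf al q ga (x t - p) * exp (r * t) \<le> qf al q ga (x 0 - p)"
    if e: "0 < e" "e \<le> \<rho>" and sol: "is_solution F x T" and Q0: "qf al q ga (x 0 - p) < m * e^2"
      and t: "t \<in> {0..<T}" for x T e t
  proof -
    define g where "g s = qf al q ga (x s - p) * exp (r * s)" for s
    define g' where "g' s = 2 * bf al q ga (x s - p) (F (x s)) * exp (r * s) + qf al q ga (x s - p) * (exp (r * s) * r)" for s
    have dg: "(g has_real_derivative g' s) (at s within {0..<T})" if s: "s \<in> {0..<T}" for s
    proof -
      have "(x has_vector_derivative F (x s)) (at s within {0..<T})" using sol s by (simp add: is_solution_def)
      from qf_deriv[OF this, of al q ga p]
      show ?thesis unfolding g_def g'_def
        by (auto intro!: derivative_eq_intros)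
    qed
    have ng: "g' s \<le> 0" if s: "s \<in> {0..<T}" and gs: "g s < m * e^2" for s
    proof -
      define y where "y = x s - p"
      have ex1: "exp (r * s) \<ge> 1" using r s by simp
      have "qf al q ga y \<le> g s" unfolding g_def y_def using Qnn[of "x s - p"] ex1
        by (simp add: mult_le_cancel_left1)
      then have "m * (norm y)^2 < m * e^2" using lowQ[of y] gs by linarith
      then have "(norm y)^2 < e^2" using m by simp
      then have "norm y < e" using e by (smt (verit) power_mono norm_ge_zero)
      then have "norm y < \<rho>" using e by simp
      from rate[OF this] have b1: "2 * bf al q ga y (F (x s)) \<le> - (mu/2) * (norm y)^2"
        unfolding y_def by simp
      have "(mu/2) * (norm y)^2 \<ge> (mu / (2*M)) * qf al q ga y"
      proof -
        have "(mu / (2*M)) * qf al q ga y \<le> (mu / (2*M)) * (M * (norm y)^2)"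
          using upQ[of y] mu M by (intro mult_left_mono) auto
        also have "\<dots> = (mu/2) * (norm y)^2" using M by simp
        finally show ?thesis .
      qed
      then have "2 * bf al q ga y (F (x s)) + qf al q ga y * r \<le> - (mu / (4*M)) * qf al q ga y"
      proof -
        have h2: "qf al q ga y * r = (mu / (4*M)) * qf al q ga y" by (simp add: r_def)
        have h3: "(mu / (4*M)) * qf al q ga y = (1/2) * ((mu / (2*M)) * qf al q ga y)" by simp
        show ?thesis using b1 \<open>(mu/2) * (norm y)^2 \<ge> (mu / (2*M)) * qf al q ga y\<close> h2 h3 by linarith
      qed
      also have "\<dots> \<le> 0" using Qnn[of y] mu M by simp
      finally have "2 * bf al q ga y (F (x s)) + qf al q ga y * r \<le> 0" .
      then have "exp (r * s) * (2 * bf al q ga y (F (x s)) + qf al q ga y * r) \<le> 0"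
        by (simp add: mult_nonneg_nonpos)
      then show ?thesis unfolding g'_def y_def by (simp add: algebra_simps)
    qed
    have "g t \<le> g 0"
      by (rule barrier[OF dg _ ng t]) (use Q0 in \<open>auto simp: g_def\<close>)
    then show ?thesis by (simp add: g_def)
  qed
  have small: "qf al q ga (x 0 - p) < m * e^2" if e: "e > 0" and d: "dist (x 0) p < e * m / M" for x e
  proof -
    have "norm (x 0 - p) < e * m / M" using d by (simp add: dist_norm)
    then have "(norm (x 0 - p))^2 < (e * m / M)^2" by (simp add: power_strict_mono)
    then have "M * (norm (x 0 - p))^2 < M * (e * m / M)^2" using M by simp
    also have "\<dots> = e^2 * m * (m / M)" using M by (simp add: power2_eq_square field_simps)
    also have "\<dots> \<le> e^2 * m * 1" using mM m M e by (intro mult_left_mono) auto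
    finally show ?thesis using upQ[of "x 0 - p"] by (simp add: algebra_simps)
  qed
  have stable: "lyapunov_stable F p"
    unfolding lyapunov_stable_def
  proof (intro allI impI)
    fix \<epsilon> :: real assume ep: "\<epsilon> > 0"
    define e where "e = min \<epsilon> \<rho>"
    have e: "e > 0" "e \<le> \<rho>" "e \<le> \<epsilon>" using ep \<rho> by (auto simp: e_def)
    show "\<exists>\<eta>>0. \<forall>x T. is_solution F x T \<and> dist (x 0) p < \<eta> \<longrightarrow> (\<forall>t\<in>{0..<T}. dist (x t) p < \<epsilon>)"
    proof (intro exI conjI allI impI ballI)
      show "e * m / M > 0" using e m M by simp
      fix x T t assume a: "is_solution F x T \<and> dist (x 0) p < e * m / M" and t: "t \<in> {0..<T}"
      have Q0: "qf al q ga (x 0 - p) < m * e^2" using small[OF e(1)] a by blast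
      have "qf al q ga (x t - p) * exp (r * t) \<le> qf al q ga (x 0 - p)"
      proof -
        have "is_solution F x T" using a by blast
        from core[OF e(1,2) this Q0 t] show ?thesis .
      qed
      moreover have "qf al q ga (x t - p) \<le> qf al q ga (x t - p) * exp (r * t)"
        using Qnn[of "x t - p"] r t by (simp add: mult_le_cancel_left1)
      ultimately have "m * (norm (x t - p))^2 < m * e^2" using lowQ[of "x t - p"] Q0 by linarith
      then have "(norm (x t - p))^2 < e^2" using m by simp
      then have "norm (x t - p) < e" using e by (smt (verit) power_mono norm_ge_zero)
      then show "dist (x t) p < \<epsilon>" using e by (simp add: dist_norm)
    qed
  qed
  have attr: "\<exists>\<eta>>0. \<forall>x. is_global_solution F x \<and> dist (x 0) p < \<eta> \<longrightarrow> (x \<longlongrightarrow> p) at_top"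
  proof (intro exI conjI allI impI)
    show "\<rho> * m / M > 0" using \<rho> m M by simp
    fix x assume a: "is_global_solution F x \<and> dist (x 0) p < \<rho> * m / M"
    define Q0 where "Q0 = qf al q ga (x 0 - p)"
    have Q0s: "Q0 < m * \<rho>^2" unfolding Q0_def using small[OF \<rho>(1)] a by blast
    have bnd: "(norm (x t - p))^2 \<le> (Q0 / m) * exp (- (r * t))" if t: "t \<ge> 0" for t
    proof -
      have sol: "is_solution F x (t + 1)" unfolding is_solution_def
      proof
        fix s assume s: "s \<in> {0..<t+1}"
        have "(x has_vector_derivative F (x s)) (at s within {0..})"
          using a s by (simp add: is_global_solution_def)
        then show "(x has_vector_derivative F (x s)) (at s within {0..<t+1})"
          by (rule has_vector_derivative_within_subset) auto
      qed
      have "qf al q ga (x t - p) * exp (r * t) \<le> Q0"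
        unfolding Q0_def using core[OF \<rho>(1) order.refl sol Q0s[unfolded Q0_def]] t by simp
      then have "m * (norm (x t - p))^2 * exp (r * t) \<le> Q0"
        using lowQ[of "x t - p"] by (smt (verit) exp_gt_zero mult_right_mono)
      then have "(norm (x t - p))^2 \<le> Q0 / (m * exp (r * t))"
        using m by (simp add: field_simps)
      then show ?thesis by (simp add: exp_minus field_simps)
    qed
    have "((\<lambda>t. (norm (x t - p))^2) \<longlongrightarrow> 0) at_top"
    proof (rule tendsto_sandwich[where f="\<lambda>_. 0" and h="\<lambda>t. (Q0 / m) * exp (- (r * t))"])
      show "\<forall>\<^sub>F t in at_top. 0 \<le> (norm (x t - p))^2" by simp
      show "\<forall>\<^sub>F t in at_top. (norm (x t - p))^2 \<le> (Q0 / m) * exp (- (r * t))"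
        using eventually_ge_at_top[of "0::real"] by (rule eventually_mono) (rule bnd)
      show "((\<lambda>_. 0) \<longlongrightarrow> (0::real)) at_top" by simp
      show "((\<lambda>t. (Q0 / m) * exp (- (r * t))) \<longlongrightarrow> 0) at_top" by (rule exp_decay[OF r])
    qed
    then have "((\<lambda>t. sqrt ((norm (x t - p))^2)) \<longlongrightarrow> sqrt 0) at_top" by (rule tendsto_real_sqrt)
    then have "((\<lambda>t. norm (x t - p)) \<longlongrightarrow> 0) at_top" by simp
    then have "((\<lambda>t. x t - p) \<longlongrightarrow> 0) at_top" by (simp add: tendsto_norm_zero_iff)
    then show "(x \<longlongrightarrow> p) at_top" by (simp add: Lim_null[symmetric])
  qed
  show ?thesis unfolding loc_asymp_stable_def equilibrium_def using eq stable attr by blast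
qed


lemma unstab_abstract:
  fixes F :: "real \<times> real \<Rightarrow> real \<times> real"
  assumes eq: "F p = (0,0)" and jac: "is_jacobian F p j11 j12 j21 j22"
    and r0: "\<rho>0 > 0" and Lf: "Lf > 0"
    and lipF: "\<And>x y. x \<in> cball p \<rho>0 \<Longrightarrow> y \<in> cball p \<rho>0 \<Longrightarrow> norm (F x - F y) \<le> Lf * norm (x - y)"
    and mu: "mu > 0"
    and pos: "\<And>y. 2 * bf al q ga y (linJ j11 j12 j21 j22 y) \<ge> mu * (norm y)^2"
    and v: "qf al q ga v > 0"
  shows "\<not> lyapunov_stable F p"
proof
  assume st: "lyapunov_stable F p"
  define C where "C = \<bar>al\<bar> + 2 * \<bar>q\<bar> + \<bar>ga\<bar> + 1"
  define \<kappa> where "\<kappa> = mu / (4 * C)"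
  have kp: "\<kappa> > 0" unfolding \<kappa>_def C_def using mu by simp
  obtain \<rho>1 where \<rho>1: "\<rho>1 > 0" "\<And>y. norm y < \<rho>1 \<Longrightarrow> norm (F (p + y) - linJ j11 j12 j21 j22 y) \<le> \<kappa> * norm y"
    using jac_remainder[OF jac eq kp] by blast
  have rate: "2 * bf al q ga y (F (p + y)) \<ge> (mu/2) * (norm y)^2" if "norm y < \<rho>1" for y
  proof -
    have "2 * bf al q ga y (F (p + y)) = 2 * bf al q ga y (linJ j11 j12 j21 j22 y)
          + 2 * bf al q ga y (F (p + y) - linJ j11 j12 j21 j22 y)"
      using bf_diff[of al q ga y "F (p + y)" "linJ j11 j12 j21 j22 y"] by simp
    moreover have "\<bar>2 * bf al q ga y (F (p + y) - linJ j11 j12 j21 j22 y)\<bar> \<le> (mu/2) * (norm y)^2"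
      by (rule rate_bound[OF \<rho>1(2)[OF that] \<kappa>_def C_def mu])
    ultimately show ?thesis using pos[of y] by linarith
  qed
  define Mw where "Mw = \<bar>al\<bar> + \<bar>q\<bar> + \<bar>ga\<bar> + 1"
  have Mw: "Mw > 0" unfolding Mw_def by simp
  have upW: "qf al q ga y \<le> Mw * (norm y)^2" for y
  proof -
    have "qf al q ga y \<le> (\<bar>al\<bar> + \<bar>q\<bar> + \<bar>ga\<bar>) * (norm y)^2" by (rule qf_upper)
    also have "\<dots> \<le> Mw * (norm y)^2" unfolding Mw_def by (simp add: mult_right_mono)
    finally show ?thesis .
  qed
  define \<epsilon> where "\<epsilon> = min \<rho>0 \<rho>1 / 3"
  have ep: "\<epsilon> > 0" "3 * \<epsilon> \<le> \<rho>0" "\<epsilon> < \<rho>1" using r0 \<rho>1 by (auto simp: \<epsilon>_def)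
  obtain \<eta> where eta: "\<eta> > 0"
    and H: "\<And>x T. is_solution F x T \<Longrightarrow> dist (x 0) p < \<eta> \<Longrightarrow> (\<forall>t\<in>{0..<T}. dist (x t) p < \<epsilon>)"
    using st ep(1) unfolding lyapunov_stable_def by meson
  have vnz: "v \<noteq> 0" using v by (auto simp: qf_def)
  then have nv: "norm v > 0" by simp
  define s where "s = min \<eta> \<epsilon> / (2 * norm v)"
  have sp: "s > 0" unfolding s_def using eta ep nv by simp
  define y0 where "y0 = s *\<^sub>R v"
  have ny0: "norm y0 = min \<eta> \<epsilon> / 2" unfolding y0_def s_def using nv eta ep by simp
  define W0 where "W0 = qf al q ga y0"
  have W0: "W0 > 0" unfolding W0_def y0_def qf_scale using sp v by simp
  define k where "k = mu * W0 / (2 * Mw)"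
  have kpos: "k > 0" unfolding k_def using mu W0 Mw by simp
  define Tend where "Tend = Mw * \<epsilon>^2 / k"
  have Tend: "Tend > 0" unfolding Tend_def using Mw ep kpos by simp
  define cp where "cp = closest_point (cball p \<rho>0)"
  have cpin: "cp x \<in> cball p \<rho>0" for x
    unfolding cp_def by (rule closest_point_in_set) (use r0 in auto)
  have cplip: "dist (cp x) (cp y) \<le> dist x y" for x y
    unfolding cp_def by (rule closest_point_lipschitz) (use r0 in auto)
  have cpself: "x \<in> cball p \<rho>0 \<Longrightarrow> cp x = x" for x unfolding cp_def by (rule closest_point_self)
  define G where "G x = F (cp x)" for x
  have lipG: "norm (G x - G y) \<le> Lf * norm (x - y)" for x y
  proof -
    have "norm (G x - G y) \<le> Lf * norm (cp x - cp y)" unfolding G_def by (rule lipF[OF cpin cpin])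
    also have "\<dots> \<le> Lf * norm (x - y)" using cplip[of x y] Lf by (simp add: dist_norm mult_left_mono)
    finally show ?thesis .
  qed
  obtain z where z0: "z 0 = p + y0"
    and zd: "\<forall>t\<in>{0..Tend+1}. (z has_vector_derivative G (z t)) (at t within {0..Tend+1})"
    using ode_exists[OF lipG Lf, of "p + y0" "Tend + 1"] by blast
  have contz: "continuous_on {0..Tend+1} z"
    using zd by (meson has_vector_derivative_continuous continuous_on_eq_continuous_within)
  have GF: "G (z t) = F (z t)" if "dist (z t) p \<le> \<rho>0" for t
    unfolding G_def using that by (subst cpself) (auto simp: dist_commute)
  have phi0: "dist (z 0) p = min \<eta> \<epsilon> / 2" using z0 ny0 by (simp add: dist_norm)
  have exists: "\<exists>t\<in>{0..Tend}. \<epsilon> \<le> dist (z t) p"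
  proof (rule ccontr)
    assume "\<not> ?thesis"
    then have small: "dist (z t) p < \<epsilon>" if "t \<in> {0..Tend}" for t using that by force
    define w where "w t = qf al q ga (z t - p)" for t
    define w' where "w' t = 2 * bf al q ga (z t - p) (F (z t))" for t
    have dw: "(w has_real_derivative w' t) (at t within {0..t'})" if "t \<in> {0..t'}" "t' \<in> {0..Tend}" for t t'
    proof -
      have "(z has_vector_derivative G (z t)) (at t within {0..Tend+1})" using zd that by auto
      then have "(z has_vector_derivative G (z t)) (at t within {0..t'})"
        by (rule has_vector_derivative_within_subset) (use that in auto)
      moreover have "G (z t) = F (z t)" using GF[of t] small[of t] that ep by auto
      ultimately have "(z has_vector_derivative F (z t)) (at t within {0..t'})" by simp
      from qf_deriv[OF this, of al q ga p] show ?thesis unfolding w_def w'_def .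
    qed
    have w'low: "w' t \<ge> (mu/2) * (norm (z t - p))^2" if "t \<in> {0..Tend}" for t
    proof -
      have "norm (z t - p) < \<rho>1" using small[OF that] ep by (simp add: dist_norm)
      from rate[OF this] show ?thesis unfolding w'_def by simp
    qed
    have mono: "w t \<ge> W0" if t: "t \<in> {0..Tend}" for t
    proof -
      have "w t - w 0 \<ge> 0 * (t - 0)"
      proof (rule deriv_lower2[where g'=w'])
        show "0 \<le> t" using t by simp
        show "\<And>s. s \<in> {0..t} \<Longrightarrow> (w has_real_derivative w' s) (at s within {0..t})"
          using dw t by auto
        fix s assume "0 < s" "s < t"
        then have "w' s \<ge> (mu/2) * (norm (z s - p))^2" using w'low t by auto
        moreover have "(mu/2) * (norm (z s - p))^2 \<ge> 0" using mu by simp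
        ultimately show "0 \<le> w' s" by linarith
      qed
      then show ?thesis using z0 by (simp add: w_def W0_def)
    qed
    have w'k: "w' t \<ge> k" if t: "t \<in> {0..Tend}" for t
    proof -
      have "k = (mu/2) * (W0 / Mw)" unfolding k_def by simp
      also have "\<dots> \<le> (mu/2) * (w t / Mw)" using mono[OF t] mu Mw by (simp add: divide_right_mono)
      also have "\<dots> \<le> (mu/2) * (norm (z t - p))^2"
      proof -
        have "w t / Mw \<le> (norm (z t - p))^2" using upW[of "z t - p"] Mw by (simp add: w_def field_simps)
        then show ?thesis by (rule mult_left_mono) (use mu in auto)
      qed
      also have "\<dots> \<le> w' t" by (rule w'low[OF t])
      finally show ?thesis .
    qed
    have "w Tend - w 0 \<ge> k * (Tend - 0)"
      by (rule deriv_lower2[where g'=w']) (use dw Tend w'k in auto)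
    then have "w Tend \<ge> W0 + Mw * \<epsilon>^2" using z0 kpos unfolding Tend_def by (simp add: w_def W0_def)
    moreover have "w Tend < Mw * \<epsilon>^2"
    proof -
      have "norm (z Tend - p) < \<epsilon>" using small[of Tend] Tend by (simp add: dist_norm)
      then have "(norm (z Tend - p))^2 < \<epsilon>^2" by (simp add: power_strict_mono)
      then have "Mw * (norm (z Tend - p))^2 < Mw * \<epsilon>^2" using Mw by simp
      then show ?thesis using upW[of "z Tend - p"] unfolding w_def by linarith
    qed
    ultimately show False using W0 by linarith
  qed
  define A where "A = {t \<in> {0..Tend}. (\<lambda>_. \<epsilon>) t \<le> dist (z t) p}"
  have Ane: "A \<noteq> {}" using exists by (auto simp: A_def)
  have contphi: "continuous_on {0..Tend} (\<lambda>t. dist (z t) p)"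
    by (intro continuous_intros continuous_on_subset[OF contz]) auto
  have clA: "closed A" unfolding A_def
    by (rule continuous_on_closed_Collect_le[OF continuous_on_const contphi closed_atLeastAtMost])
  have bddA: "bdd_below A" unfolding A_def by (rule bdd_belowI[where m=0]) auto
  define t1 where "t1 = Inf A"
  have t1A: "t1 \<in> A" unfolding t1_def by (rule closed_contains_Inf[OF Ane bddA clA])
  have below: "dist (z s) p < \<epsilon>" if "0 \<le> s" "s < t1" for s
  proof (rule ccontr)
    assume "\<not> dist (z s) p < \<epsilon>"
    then have "s \<in> A" using that t1A by (auto simp: A_def)
    then have "t1 \<le> s" unfolding t1_def by (rule cInf_lower[OF _ bddA])
    then show False using that by simp
  qed
  have t1r: "0 \<le> t1" "t1 \<le> Tend" "\<epsilon> \<le> dist (z t1) p" using t1A by (auto simp: A_def)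
  have t1pos: "t1 > 0"
  proof (rule ccontr)
    assume "\<not> t1 > 0"
    then have "t1 = 0" using t1r by simp
    then show False using t1r phi0 ep eta by (simp add: min_def split: if_splits)
  qed
  have "continuous (at t1 within {0..Tend+1}) z"
    using contz t1r by (simp add: continuous_on_eq_continuous_within)
  then obtain \<delta> where del: "\<delta> > 0" "\<And>s. s \<in> {0..Tend+1} \<Longrightarrow> dist s t1 < \<delta> \<Longrightarrow> dist (z s) (z t1) < \<epsilon>"
    unfolding continuous_within_eps_delta using ep by blast
  define s0 where "s0 = max 0 (t1 - \<delta>/2)"
  have s0: "0 \<le> s0" "s0 < t1" "dist s0 t1 < \<delta>" "s0 \<in> {0..Tend+1}"
    using t1pos del t1r by (auto simp: s0_def dist_real_def)
  have phit1: "dist (z t1) p < 2 * \<epsilon>"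
  proof -
    have "dist (z t1) p \<le> dist (z s0) (z t1) + dist (z s0) p" by (rule dist_triangle3)
    then show ?thesis using below[OF s0(1,2)] del(2)[OF s0(4) s0(3)] by linarith
  qed
  define T' where "T' = min (t1 + \<delta>) (Tend + 1)"
  have sol: "is_solution F z T'"
    unfolding is_solution_def
  proof
    fix s assume s: "s \<in> {0..<T'}"
    then have sI: "s \<in> {0..Tend+1}" by (auto simp: T'_def)
    have "dist (z s) p \<le> \<rho>0"
    proof (cases "s < t1")
      case True
      then show ?thesis using below[of s] s ep by auto
    next
      case False
      then have "dist s t1 < \<delta>" using s by (auto simp: T'_def dist_real_def)
      then have "dist (z s) (z t1) < \<epsilon>" using del(2)[OF sI] by simp
      moreover have "dist (z s) p \<le> dist (z s) (z t1) + dist (z t1) p" by (rule dist_triangle)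
      ultimately show ?thesis using phit1 ep by linarith
    qed
    then have "G (z s) = F (z s)" by (rule GF)
    moreover have "(z has_vector_derivative G (z s)) (at s within {0..Tend+1})" using zd sI by auto
    ultimately have "(z has_vector_derivative F (z s)) (at s within {0..Tend+1})" by simp
    moreover have "{0..<T'} \<subseteq> {0..Tend+1}" by (auto simp: T'_def)
    ultimately show "(z has_vector_derivative F (z s)) (at s within {0..<T'})"
      by (rule has_vector_derivative_within_subset)
  qed
  have "dist (z 0) p < \<eta>" using phi0 eta ep by (simp add: min_def split: if_splits)
  from H[OF sol this] have "dist (z t1) p < \<epsilon>" using t1r del by (auto simp: T'_def)
  then show False using t1r by simp
qed


lemma saddle_stab_forms:
  fixes T A B :: real
  assumes A: "A > 0" and B: "B < 0" and mu_def: "mu = 2 * min (- B) A"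
  shows "\<And>y. 2 * bf 0 (-1) (T / B) y (linJ T (-A) B 0 y) \<ge> mu * (norm y)^2"
    and "qf 0 (-1) (T / B) (\<bar>T / B\<bar> + 1, -1) > 0"
    and "mu > 0"
proof -
  show "mu > 0" using A B mu_def by simp
  fix y :: "real \<times> real"
  have e: "2 * bf 0 (-1) (T / B) y (linJ T (-A) B 0 y) = 2 * (- B) * (fst y)^2 + 2 * A * (snd y)^2"
    unfolding bf_def linJ_def using B by (simp add: power2_eq_square field_simps)
  have "mu * (norm y)^2 = mu * (fst y)^2 + mu * (snd y)^2" by (simp add: nsq algebra_simps)
  moreover have "mu * (fst y)^2 \<le> 2 * (- B) * (fst y)^2" using mu_def by (intro mult_right_mono) auto
  moreover have "mu * (snd y)^2 \<le> 2 * A * (snd y)^2" using mu_def by (intro mult_right_mono) auto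
  ultimately show "2 * bf 0 (-1) (T / B) y (linJ T (-A) B 0 y) \<ge> mu * (norm y)^2" using e by linarith
next
  have "qf 0 (-1) (T / B) (\<bar>T / B\<bar> + 1, -1) = 2 * \<bar>T / B\<bar> + 2 + T / B" by (simp add: qf_def)
  moreover have "- (T / B) \<le> \<bar>T / B\<bar>" by (rule abs_ge_minus_self)
  ultimately show "qf 0 (-1) (T / B) (\<bar>T / B\<bar> + 1, -1) > 0" by linarith
qed

lemma stable_forms:
  fixes T A B :: real
  assumes A: "A > 0" and B: "B > 0" and T: "T < 0"
    and q_def: "q = min (- T / (2 * B)) (min 1 (A / B) / 2)"
    and ga_def: "ga = (A - q * T) / B"
    and mu_def: "mu = 2 * min (- (T + q * B)) (q * A)"
  shows "\<And>y. 2 * bf 1 q ga y (linJ T (-A) B 0 y) \<le> - mu * (norm y)^2"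
    and "1 * ga - q^2 > 0"
    and "mu > 0"
proof -
  have qp: "q > 0" unfolding q_def using A B T by (simp add: divide_pos_pos divide_neg_pos)
  have qm: "q \<le> min 1 (A/B) / 2" "q \<le> - T / (2 * B)" unfolding q_def by (rule min.cobounded2, rule min.cobounded1)
  have hh: "A / (2 * B) = (A / B) / 2" by simp
  have q1: "q \<le> - T / (2 * B)" "q \<le> 1/2" "q \<le> A / (2 * B)"
  proof -
    have m1: "min 1 (A/B) / 2 \<le> 1/2" "min 1 (A/B) / 2 \<le> (A/B)/2" by (simp_all add: min_def)
    show "q \<le> - T / (2 * B)" using qm by simp
    show "q \<le> 1/2" by (rule order_trans[OF qm(1) m1(1)])
    show "q \<le> A / (2 * B)" unfolding hh by (rule order_trans[OF qm(1) m1(2)])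
  qed
  have TqB: "T + q * B \<le> T / 2"
  proof -
    have "q * B \<le> (- T / (2 * B)) * B" using mult_right_mono[OF q1(1), of B] B by linarith
    also have "\<dots> = - T / 2" using B by simp
    finally show ?thesis by simp
  qed
  show "mu > 0" unfolding mu_def using TqB T qp A by simp
  fix y :: "real \<times> real"
  have e: "2 * bf 1 q ga y (linJ T (-A) B 0 y) = 2 * (T + q * B) * (fst y)^2 - 2 * (q * A) * (snd y)^2"
    unfolding bf_def linJ_def ga_def using B by (simp add: power2_eq_square field_simps)
  have "mu * (norm y)^2 = mu * (fst y)^2 + mu * (snd y)^2" by (simp add: nsq algebra_simps)
  moreover have "mu * (fst y)^2 \<le> - 2 * (T + q * B) * (fst y)^2" using mu_def by (intro mult_right_mono) (auto simp: min_def)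
  moreover have "mu * (snd y)^2 \<le> 2 * (q * A) * (snd y)^2" using mu_def by (intro mult_right_mono) (auto simp: min_def)
  ultimately show "2 * bf 1 q ga y (linJ T (-A) B 0 y) \<le> - mu * (norm y)^2" using e by linarith
next
  have qp: "q > 0" unfolding q_def using A B T by (simp add: divide_pos_pos divide_neg_pos)
  have qm: "q \<le> min 1 (A/B) / 2" unfolding q_def by (rule min.cobounded2)
  have hh: "A / (2 * B) = (A / B) / 2" by simp
  have q1: "q \<le> 1/2" "q \<le> A / (2 * B)"
  proof -
    have m1: "min 1 (A/B) / 2 \<le> 1/2" "min 1 (A/B) / 2 \<le> (A/B)/2" by (simp_all add: min_def)
    show "q \<le> 1/2" by (rule order_trans[OF qm(1) m1(1)])
    show "q \<le> A / (2 * B)" unfolding hh by (rule order_trans[OF qm(1) m1(2)])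
  qed
  have "ga \<ge> A / B"
  proof -
    have "q * T \<le> 0" using qp T by (simp add: mult_pos_neg less_imp_le)
    then have "- q * T \<ge> 0" by simp
    then show ?thesis unfolding ga_def using B by (simp add: divide_right_mono)
  qed
  moreover have "q^2 \<le> A / (4 * B)"
  proof -
    have "q^2 = q * q" by (simp add: power2_eq_square)
    also have "\<dots> \<le> (1/2) * (A / (2 * B))" using q1 qp by (intro mult_mono) auto
    finally show ?thesis by simp
  qed
  moreover have "A / (4 * B) < A / B" using A B by (simp add: divide_strict_left_mono)
  ultimately show "1 * ga - q^2 > 0" by simp
qed

lemma saddle_eigs:
  fixes T A B :: real
  assumes AB: "A * B < 0"
  shows "\<exists>l1 l2 :: real. l1 < 0 \<and> 0 < l2 \<and> is_eigenvalue2 T (-A) B 0 (of_real l1) \<and> is_eigenvalue2 T (-A) B 0 (of_real l2)"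
proof -
  define S where "S = sqrt (T^2 - 4 * (A * B))"
  have nn: "T^2 - 4 * (A * B) \<ge> 0" using AB zero_le_power2[of T] by linarith
  have S2: "S^2 = T^2 - 4 * (A * B)" unfolding S_def using nn by (simp add: real_sqrt_pow2)
  have "S^2 > T^2" using S2 AB by simp
  then have "\<bar>T\<bar>^2 < S^2" by simp
  moreover have "S \<ge> 0" unfolding S_def using nn by simp
  ultimately have ST: "S > \<bar>T\<bar>" by (rule power2_less_imp_less)
  have eig: "is_eigenvalue2 T (-A) B 0 (of_real l)" if "l^2 - T * l + A * B = 0" for l
  proof -
    have "(T - l) * (0 - l) - (-A) * B = 0" using that by (simp add: power2_eq_square algebra_simps)
    then have "complex_of_real ((T - l) * (0 - l) - (-A) * B) = 0" by simp
    then show ?thesis unfolding is_eigenvalue2_def by simp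
  qed
  show ?thesis
  proof (intro exI conjI)
    show "(T - S)/2 < 0" "0 < (T + S)/2" using ST by auto
    show "is_eigenvalue2 T (-A) B 0 (of_real ((T - S)/2))"
      by (rule eig) (simp add: power2_eq_square field_simps S2[unfolded power2_eq_square])
    show "is_eigenvalue2 T (-A) B 0 (of_real ((T + S)/2))"
      by (rule eig) (simp add: power2_eq_square field_simps S2[unfolded power2_eq_square])
  qed
qed


definition e11 where "e11 r K h w a b N P = r * (1 - N / K - h / (w + N)) + r * N * (- 1 / K + h / (w + N)^2) - a * P * (b - N^2) / (b + N^2)^2"
definition e12 where "e12 a b N = - a * N / (b + N^2)"
definition e21 where "e21 b c N P = c * P * (b - N^2) / (b + N^2)^2"
definition e22 where "e22 b c \<delta> N = c * N / (b + N^2) - \<delta>"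

lemma pp_field_eq: "pp_field r K h w a b c \<delta> = (\<lambda>x. (r * fst x * (1 - fst x / K - h / (w + fst x)) - a * fst x * snd x / (b + (fst x)^2),
      c * fst x * snd x / (b + (fst x)^2) - \<delta> * snd x))"
  by (simp add: pp_field_def fun_eq_iff case_prod_beta)

lemma pp_deriv:
  assumes K: "K \<noteq> 0" and b: "b > 0" and wN: "w + N \<noteq> 0"
  shows "(pp_field r K h w a b c \<delta> has_derivative
     (\<lambda>(u, v). (e11 r K h w a b N P * u + e12 a b N * v, e21 b c N P * u + e22 b c \<delta> N * v))) (at (N, P))"
proof -
  have bN: "b + N^2 \<noteq> 0" using b by (smt (verit) zero_le_power2)
  define D where "D = b + N^2"
  define E where "E = w + N"
  have DZ: "D \<noteq> 0" "E \<noteq> 0" using bN wN by (simp_all add: D_def E_def)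
  show ?thesis unfolding pp_field_eq
    apply (rule has_derivative_eq_rhs)
     apply (rule derivative_eq_intros refl | simp add: wN bN K)+
    apply (auto simp: fun_eq_iff e11_def e12_def e21_def e22_def)
     apply (unfold D_def[symmetric] E_def[symmetric])
     apply (simp_all add: field_simps DZ K inverse_eq_divide)
     apply (simp_all add: D_def algebra_simps power2_eq_square)
    done
qed


lemma bN_pos: "b > 0 \<Longrightarrow> b + N^2 > (0::real)"
  by (simp add: add_pos_nonneg)

lemma pp_equil:
  assumes K: "K > 0" and a: "a > 0" and w: "w > 0" and b: "b > 0" and N: "N > 0"
    and quad: "\<delta> * N^2 - c * N + \<delta> * b = 0"
  shows "pp_field r K h w a b c \<delta> (N, Pnull r K h w a b N) = (0,0)"
proof -
  have D: "b + N^2 \<noteq> 0" using bN_pos[OF b, of N] by simp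
  have E: "w + N \<noteq> 0" using w N by simp
  have c: "c * N = \<delta> * (b + N^2)" using quad by (simp add: algebra_simps)
  define Dv where "Dv = b + N^2"
  define Ev where "Ev = w + N"
  have DE: "Dv \<noteq> 0" "Ev \<noteq> 0" using D E by (simp_all add: Dv_def Ev_def)
  have 1: "r * N * (1 - N / K - h / (w + N)) - a * N * Pnull r K h w a b N / (b + N^2) = 0"
    unfolding Pnull_def Dv_def[symmetric] Ev_def[symmetric]
    using K a DE by (simp add: field_simps) (simp add: Ev_def algebra_simps power2_eq_square)
  have 2: "c * N * Pnull r K h w a b N / (b + N^2) - \<delta> * Pnull r K h w a b N = 0"
    using D c by (simp add: field_simps)
  show ?thesis unfolding pp_field_def using 1 2 by simp
qed

lemma e11_eq:
  assumes K: "K > 0" and a: "a > 0" and w: "w > 0" and b: "b > 0" and N: "N > 0"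
  shows "e11 r K h w a b N (Pnull r K h w a b N) = Tr r K h w a b N"
proof -
  define P where "P = Pnull r K h w a b N"
  have D: "b + N^2 \<noteq> 0" using bN_pos[OF b, of N] by simp
  have E: "w + N \<noteq> 0" using w N by simp
  define Dv where "Dv = b + N^2"
  define Ev where "Ev = w + N"
  have DE: "Dv \<noteq> 0" "Ev \<noteq> 0" using D E by (simp_all add: Dv_def Ev_def)
  have key: "r * (1 - N / K - h / (w + N)) = a * P / (b + N^2)"
    unfolding P_def Pnull_def Dv_def[symmetric] Ev_def[symmetric]
    using K a DE by (simp add: field_simps) (simp add: Ev_def algebra_simps power2_eq_square)
  have bm: "b - N^2 = Dv - 2 * N^2" by (simp add: Dv_def)
  have k2: "a * P / (b + N^2) - a * P * (b - N^2) / (b + N^2)^2 = 2 * a * P * N^2 / (b + N^2)^2"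
    unfolding bm Dv_def[symmetric] using DE by (simp add: field_simps) (simp add: algebra_simps power2_eq_square power4_eq_xxxx)
  have "e11 r K h w a b N P = a * P / (b + N^2) + r * N * (- 1 / K + h / (w + N)^2) - a * P * (b - N^2) / (b + N^2)^2"
    unfolding e11_def key by simp
  also have "\<dots> = h * r * N / (w + N)^2 + 2 * a * P * N^2 / (b + N^2)^2 - r * N / K"
    using k2 by (simp add: algebra_simps)
  finally show ?thesis unfolding Tr_def P_def .
qed

lemma e22_eq:
  fixes b c \<delta> N :: real
  assumes b: "b > 0" and quad: "\<delta> * N^2 - c * N + \<delta> * b = 0"
  shows "e22 b c \<delta> N = 0"
proof -
  have D: "b + N^2 \<noteq> 0" using bN_pos[OF b, of N] by simp
  have c: "c * N = \<delta> * (b + N^2)" using quad by (simp add: algebra_simps)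
  show ?thesis unfolding e22_def using D c by (simp add: field_simps)
qed

lemma pp_jac_equil:
  assumes K: "K > 0" and a: "a > 0" and w: "w > 0" and b: "b > 0" and N: "N > 0"
    and quad: "\<delta> * N^2 - c * N + \<delta> * b = 0"
  shows "is_jacobian (pp_field r K h w a b c \<delta>) (N, Pnull r K h w a b N)
     (Tr r K h w a b N) (- (a * N / (b + N^2)))
     (c * Pnull r K h w a b N * (b - N^2) / (b + N^2)^2) 0"
proof -
  have "(pp_field r K h w a b c \<delta> has_derivative
     (\<lambda>(u, v). (e11 r K h w a b N (Pnull r K h w a b N) * u + e12 a b N * v,
                e21 b c N (Pnull r K h w a b N) * u + e22 b c \<delta> N * v))) (at (N, Pnull r K h w a b N))"
    by (rule pp_deriv) (use K b w N in auto)
  then show ?thesis unfolding is_jacobian_def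
    using e11_eq[OF K a w b N] e22_eq[OF b quad] by (simp add: e12_def e21_def)
qed

lemma norm_pair_le: "norm (x::real, y::real) \<le> \<bar>x\<bar> + \<bar>y\<bar>"
proof -
  have "(norm (x, y))^2 \<le> (\<bar>x\<bar> + \<bar>y\<bar>)^2"
    by (simp add: norm_Pair power2_eq_square algebra_simps)
  then show ?thesis by (rule power2_le_imp_le) simp
qed

lemma onorm_lin2:
  "onorm (\<lambda>(u::real, v::real). (p11 * u + p12 * v, p21 * u + p22 * v)) \<le> \<bar>p11\<bar> + \<bar>p12\<bar> + \<bar>p21\<bar> + \<bar>p22\<bar>"
proof (rule onorm_le)
  fix z :: "real \<times> real"
  obtain u v where z: "z = (u, v)" by (cases z)
  have u: "\<bar>u\<bar> \<le> norm z" and v: "\<bar>v\<bar> \<le> norm z" using fst_le[of z] snd_le[of z] z by auto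
  have "\<bar>p11 * u + p12 * v\<bar> \<le> \<bar>p11\<bar> * norm z + \<bar>p12\<bar> * norm z"
    using abs_triangle_ineq[of "p11 * u" "p12 * v"] mult_left_mono[OF u, of "\<bar>p11\<bar>"] mult_left_mono[OF v, of "\<bar>p12\<bar>"]
    by (simp add: abs_mult)
  moreover have "\<bar>p21 * u + p22 * v\<bar> \<le> \<bar>p21\<bar> * norm z + \<bar>p22\<bar> * norm z"
    using abs_triangle_ineq[of "p21 * u" "p22 * v"] mult_left_mono[OF u, of "\<bar>p21\<bar>"] mult_left_mono[OF v, of "\<bar>p22\<bar>"]
    by (simp add: abs_mult)
  moreover have "norm (p11 * u + p12 * v, p21 * u + p22 * v) \<le> \<bar>p11 * u + p12 * v\<bar> + \<bar>p21 * u + p22 * v\<bar>"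
    by (rule norm_pair_le)
  ultimately show "norm ((\<lambda>(u, v). (p11 * u + p12 * v, p21 * u + p22 * v)) z) \<le> (\<bar>p11\<bar> + \<bar>p12\<bar> + \<bar>p21\<bar> + \<bar>p22\<bar>) * norm z"
    using z by (simp add: algebra_simps)
qed

lemma pp_lip:
  assumes K: "K > 0" and b: "b > 0" and w: "w > 0" and N: "N > 0"
  shows "\<exists>Lf>0. \<forall>x\<in>cball (N, P) (N/2). \<forall>y\<in>cball (N, P) (N/2).
           norm (pp_field r K h w a b c \<delta> x - pp_field r K h w a b c \<delta> y) \<le> Lf * norm (x - y)"
proof -
  define S where "S = cball (N, P) (N/2)"
  have fpos: "fst x > 0" if "x \<in> S" for x
  proof -
    have "\<bar>fst (x - (N, P))\<bar> \<le> norm (x - (N, P))" by (rule fst_le)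
    also have "\<dots> \<le> N/2" using that by (simp add: S_def dist_norm norm_minus_commute)
    finally have hh: "\<bar>fst x - N\<bar> \<le> N/2" by simp
    show ?thesis using abs_le_D2[OF hh] N by linarith
  qed
  have wS: "w + fst x \<noteq> 0" if "x \<in> S" for x using fpos[OF that] w by simp
  have bS: "b + (fst x)^2 \<noteq> 0" for x :: "real \<times> real" using bN_pos[OF b, of "fst x"] by simp
  define Bf where "Bf x = \<bar>e11 r K h w a b (fst x) (snd x)\<bar> + \<bar>e12 a b (fst x)\<bar> + \<bar>e21 b c (fst x) (snd x)\<bar> + \<bar>e22 b c \<delta> (fst x)\<bar>" for x
  have contB: "continuous_on S Bf"
    unfolding Bf_def e11_def e12_def e21_def e22_def
    using wS bS K by (auto intro!: continuous_intros)
  obtain xm where xm: "xm \<in> S" "\<And>y. y \<in> S \<Longrightarrow> Bf y \<le> Bf xm"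
    using continuous_attains_sup[OF _ _ contB] N by (auto simp: S_def)
  define Lf where "Lf = max (Bf xm) 1"
  have der: "(pp_field r K h w a b c \<delta> has_derivative
     (\<lambda>(u, v). (e11 r K h w a b (fst x) (snd x) * u + e12 a b (fst x) * v,
                e21 b c (fst x) (snd x) * u + e22 b c \<delta> (fst x) * v))) (at x within S)" if "x \<in> S" for x
  proof -
    have "(pp_field r K h w a b c \<delta> has_derivative
     (\<lambda>(u, v). (e11 r K h w a b (fst x) (snd x) * u + e12 a b (fst x) * v,
                e21 b c (fst x) (snd x) * u + e22 b c \<delta> (fst x) * v))) (at (fst x, snd x))"
      by (rule pp_deriv) (use K b wS[OF that] in auto)
    then show ?thesis by (simp add: has_derivative_at_withinI)
  qed
  have onb: "onorm (\<lambda>(u, v). (e11 r K h w a b (fst x) (snd x) * u + e12 a b (fst x) * v,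
                e21 b c (fst x) (snd x) * u + e22 b c \<delta> (fst x) * v)) \<le> Lf" if "x \<in> S" for x
    using onorm_lin2 xm(2)[OF that] unfolding Lf_def Bf_def by (meson max.coboundedI1 order_trans)
  show ?thesis
  proof (intro exI conjI ballI)
    show "Lf > 0" unfolding Lf_def by simp
    have cS: "convex S" unfolding S_def by simp
    fix x y assume "x \<in> cball (N, P) (N/2)" "y \<in> cball (N, P) (N/2)"
    then have xy: "x \<in> S" "y \<in> S" unfolding S_def by auto
    show "norm (pp_field r K h w a b c \<delta> x - pp_field r K h w a b c \<delta> y) \<le> Lf * norm (x - y)"
      by (rule differentiable_bound[OF cS der onb xy])
  qed
qed


lemma part_i:
  fixes r K h w a b c \<delta> :: real
  assumes "r > 0" "K > 0" "h > 0" "w > 0" "a > 0" "b > 0" "c > 0" "\<delta> > 0"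
    and bb: "b = (c / (2 * \<delta>))^2"
  shows "non_hyperbolic (pp_field r K h w a b c \<delta>) (N6 c \<delta>, Pnull r K h w a b (N6 c \<delta>))"
proof -
  define N where "N = N6 c \<delta>"
  have N: "N > 0" unfolding N_def N6_def using assms by simp
  have bN: "b = N^2" unfolding N_def N6_def using bb by simp
  have quad: "\<delta> * N^2 - c * N + \<delta> * b = 0"
    unfolding bN unfolding N_def N6_def using assms by (simp add: field_simps power2_eq_square)
  have eq: "pp_field r K h w a b c \<delta> (N, Pnull r K h w a b N) = (0,0)"
    by (rule pp_equil) (use assms N quad in auto)
  have jac: "is_jacobian (pp_field r K h w a b c \<delta>) (N, Pnull r K h w a b N)
     (Tr r K h w a b N) (- (a * N / (b + N^2)))
     (c * Pnull r K h w a b N * (b - N^2) / (b + N^2)^2) 0"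
    by (rule pp_jac_equil) (use assms N quad in auto)
  have j21: "c * Pnull r K h w a b N * (b - N^2) / (b + N^2)^2 = 0" using bN by simp
  have "is_eigenvalue2 (Tr r K h w a b N) (- (a * N / (b + N^2))) (c * Pnull r K h w a b N * (b - N^2) / (b + N^2)^2) 0 0"
    unfolding is_eigenvalue2_def j21 by simp
  then show ?thesis unfolding non_hyperbolic_def equilibrium_def N_def[symmetric]
    using eq jac by fastforce
qed

lemma roots:
  fixes b c \<delta> :: real
  assumes "b > 0" "c > 0" "\<delta> > 0" and bl: "b < (c / (2 * \<delta>))^2"
  shows "N5 b c \<delta> > 0" "N5 b c \<delta> < N4 b c \<delta>"
    "\<delta> * (N4 b c \<delta>)^2 - c * N4 b c \<delta> + \<delta> * b = 0"
    "\<delta> * (N5 b c \<delta>)^2 - c * N5 b c \<delta> + \<delta> * b = 0"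
    "N4 b c \<delta> * N5 b c \<delta> = b"
proof -
  define D where "D = Ddisc b c \<delta>"
  define s where "s = sqrt D"
  have "4 * b * \<delta>^2 < c^2"
  proof -
    have "b < c^2 / (4 * \<delta>^2)" using bl by (simp add: power_divide power_mult_distrib)
    then show ?thesis using assms by (simp add: field_simps)
  qed
  then have Dp: "D > 0" unfolding D_def Ddisc_def by simp
  have s2: "s^2 = D" unfolding s_def using Dp by simp
  have sp: "s > 0" unfolding s_def using Dp by simp
  have sc: "s < c"
  proof -
    have "s^2 < c^2" using s2 assms unfolding D_def Ddisc_def by simp
    then show ?thesis using assms sp by (simp add: power_less_imp_less_base)
  qed
  have N4: "N4 b c \<delta> = (c + s) / (2 * \<delta>)" unfolding N4_def s_def D_def ..
  have N5: "N5 b c \<delta> = (c - s) / (2 * \<delta>)" unfolding N5_def s_def D_def ..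
  have Dd: "D = c^2 - 4 * b * \<delta>^2" unfolding D_def Ddisc_def ..
  show "N5 b c \<delta> > 0" unfolding N5 using sc assms by simp
  show "N5 b c \<delta> < N4 b c \<delta>" unfolding N5 N4 using sp assms by (simp add: divide_strict_right_mono)
  have z: "s^2 - c^2 + 4 * \<delta>^2 * b = 0" using s2 Dd by simp
  have "\<delta> * ((c + s) / (2 * \<delta>))^2 - c * ((c + s) / (2 * \<delta>)) + \<delta> * b = (s^2 - c^2 + 4 * \<delta>^2 * b) / (4 * \<delta>)"
    using assms by (simp add: field_simps power2_eq_square)
  then show "\<delta> * (N4 b c \<delta>)^2 - c * N4 b c \<delta> + \<delta> * b = 0" unfolding N4 z by simp
  have "\<delta> * ((c - s) / (2 * \<delta>))^2 - c * ((c - s) / (2 * \<delta>)) + \<delta> * b = (s^2 - c^2 + 4 * \<delta>^2 * b) / (4 * \<delta>)"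
    using assms by (simp add: field_simps power2_eq_square)
  then show "\<delta> * (N5 b c \<delta>)^2 - c * N5 b c \<delta> + \<delta> * b = 0" unfolding N5 z by simp
  show "N4 b c \<delta> * N5 b c \<delta> = b"
    unfolding N4 N5 using assms s2 Dd by (simp add: field_simps power2_eq_square)
qed


lemma part_ii:
  fixes r K h w a b c \<delta> :: real
  assumes pos: "r > 0" "K > 0" "h > 0" "w > 0" "a > 0" "b > 0" "c > 0" "\<delta> > 0"
    and bl: "b < (c / (2 * \<delta>))^2"
    and P4: "Pnull r K h w a b (N4 b c \<delta>) > 0" and P5: "Pnull r K h w a b (N5 b c \<delta>) > 0"
  shows "unstable (pp_field r K h w a b c \<delta>) (N4 b c \<delta>, Pnull r K h w a b (N4 b c \<delta>))
        \<and> (Tr r K h w a b (N4 b c \<delta>) < 0 \<longrightarrow>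
             saddle (pp_field r K h w a b c \<delta>) (N4 b c \<delta>, Pnull r K h w a b (N4 b c \<delta>)))
        \<and> (Tr r K h w a b (N5 b c \<delta>) < 0 \<longrightarrow>
             loc_asymp_stable (pp_field r K h w a b c \<delta>) (N5 b c \<delta>, Pnull r K h w a b (N5 b c \<delta>)))"
proof -
  note R = roots[OF pos(6,7,8) bl]
  define N4' where "N4' = N4 b c \<delta>"
  define N5' where "N5' = N5 b c \<delta>"
  have n5: "N5' > 0" and n45: "N5' < N4'" and q4: "\<delta> * N4'^2 - c * N4' + \<delta> * b = 0"
    and q5: "\<delta> * N5'^2 - c * N5' + \<delta> * b = 0" and prod: "N4' * N5' = b"
    using R unfolding N4'_def N5'_def by auto
  have n4: "N4' > 0" using n5 n45 by simp
  have b4: "b - N4'^2 < 0"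
  proof -
    have "N4' * N5' < N4' * N4'" using n4 n45 by simp
    then show ?thesis using prod by (simp add: power2_eq_square)
  qed
  have b5: "b - N5'^2 > 0"
  proof -
    have "N5' * N5' < N4' * N5'" using n5 n45 by simp
    then show ?thesis using prod by (simp add: power2_eq_square)
  qed
  define F where "F = pp_field r K h w a b c \<delta>"
  define P4' where "P4' = Pnull r K h w a b N4'"
  define P5' where "P5' = Pnull r K h w a b N5'"
  have p4: "P4' > 0" and p5: "P5' > 0" using P4 P5 unfolding P4'_def P5'_def N4'_def N5'_def by auto
  have D4: "b + N4'^2 > 0" and D5: "b + N5'^2 > 0" using pos by (simp_all add: add_pos_nonneg)
  define A4 where "A4 = a * N4' / (b + N4'^2)"
  define B4 where "B4 = c * P4' * (b - N4'^2) / (b + N4'^2)^2"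
  define T4 where "T4 = Tr r K h w a b N4'"
  define A5 where "A5 = a * N5' / (b + N5'^2)"
  define B5 where "B5 = c * P5' * (b - N5'^2) / (b + N5'^2)^2"
  define T5 where "T5 = Tr r K h w a b N5'"
  have A4: "A4 > 0" unfolding A4_def using pos n4 D4 by simp
  have A5: "A5 > 0" unfolding A5_def using pos n5 D5 by simp
  have B4: "B4 < 0" unfolding B4_def
  proof (rule divide_neg_pos)
    show "c * P4' * (b - N4'^2) < 0" using pos p4 b4 by (simp add: mult_pos_neg)
    show "0 < (b + N4'^2)^2" using D4 by simp
  qed
  have B5: "B5 > 0" unfolding B5_def using pos p5 b5 D5 by simp
  have eq4: "F (N4', P4') = (0,0)" unfolding F_def P4'_def
    by (rule pp_equil) (use pos n4 q4 in auto)
  have eq5: "F (N5', P5') = (0,0)" unfolding F_def P5'_def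
    by (rule pp_equil) (use pos n5 q5 in auto)
  have jac4: "is_jacobian F (N4', P4') T4 (- A4) B4 0" unfolding F_def P4'_def T4_def A4_def B4_def
    by (rule pp_jac_equil) (use pos n4 q4 in auto)
  have jac5: "is_jacobian F (N5', P5') T5 (- A5) B5 0" unfolding F_def P5'_def T5_def A5_def B5_def
    by (rule pp_jac_equil) (use pos n5 q5 in auto)
  obtain Lf where Lf: "Lf > 0" and lip: "\<forall>x\<in>cball (N4', P4') (N4'/2). \<forall>y\<in>cball (N4', P4') (N4'/2).
           norm (F x - F y) \<le> Lf * norm (x - y)"
    using pp_lip[OF pos(2,6,4) n4, of P4' r h a c \<delta>] unfolding F_def by blast
  define mu where "mu = 2 * min (- B4) A4"
  have SF1: "\<And>y. 2 * bf 0 (-1) (T4 / B4) y (linJ T4 (-A4) B4 0 y) \<ge> mu * (norm y)^2"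
    using saddle_stab_forms(1)[OF A4 B4 mu_def] .
  have SF2: "qf 0 (-1) (T4 / B4) (\<bar>T4 / B4\<bar> + 1, -1) > 0"
    using saddle_stab_forms(2)[OF A4 B4 mu_def] .
  have SF3: "mu > 0" using saddle_stab_forms(3)[OF A4 B4 mu_def] .
  have unst: "unstable F (N4', P4')"
    unfolding unstable_def equilibrium_def
  proof
    show "F (N4', P4') = (0,0)" by (rule eq4)
    show "\<not> lyapunov_stable F (N4', P4')"
    proof -
      have r0: "N4'/2 > 0" using n4 by simp
      have lip': "\<And>x y. x \<in> cball (N4', P4') (N4'/2) \<Longrightarrow> y \<in> cball (N4', P4') (N4'/2) \<Longrightarrow>
          norm (F x - F y) \<le> Lf * norm (x - y)" using lip by blast
      show ?thesis by (rule unstab_abstract[OF eq4 jac4 r0 Lf lip' SF3 SF1 SF2])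
    qed
  qed
  have sad: "saddle F (N4', P4')"
  proof -
    have "A4 * B4 < 0" using A4 B4 by (simp add: mult_pos_neg)
    then obtain l1 l2 :: real where l: "l1 < 0" "0 < l2" "is_eigenvalue2 T4 (-A4) B4 0 (of_real l1)"
      "is_eigenvalue2 T4 (-A4) B4 0 (of_real l2)" using saddle_eigs[of A4 B4 T4] by blast
    have "\<exists>j11 j12 j21 j22. is_jacobian F (N4', P4') j11 j12 j21 j22 \<and>
        (\<exists>l1 l2 :: real. l1 < 0 \<and> 0 < l2 \<and>
           is_eigenvalue2 j11 j12 j21 j22 (of_real l1) \<and>
           is_eigenvalue2 j11 j12 j21 j22 (of_real l2))"
      by (rule exI[of _ T4], rule exI[of _ "-A4"], rule exI[of _ B4], rule exI[of _ 0]) (use jac4 l in blast)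
    then show ?thesis unfolding saddle_def equilibrium_def using eq4 by blast
  qed
  have las: "loc_asymp_stable F (N5', P5')" if T5: "T5 < 0"
  proof -
    define q where "q = min (- T5 / (2 * B5)) (min 1 (A5 / B5) / 2)"
    define ga where "ga = (A5 - q * T5) / B5"
    define mu5 where "mu5 = 2 * min (- (T5 + q * B5)) (q * A5)"
    note SS = stable_forms[OF A5 B5 T5 q_def ga_def mu5_def]
    show ?thesis by (rule stab_abstract[OF eq5 jac5 _ SS(2) SS(3) SS(1)]) simp
  qed
  show ?thesis using unst sad las
    unfolding F_def N4'_def N5'_def P4'_def P5'_def T4_def T5_def by blast
qed

theorem theorem7:
  fixes r K h w a b c \<delta> :: real
  assumes "r > 0" "K > 0" "h > 0" "w > 0" "a > 0" "b > 0" "c > 0" "\<delta> > 0"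
    and "w < K"
  shows
    "(b = (c / (2 * \<delta>))^2 \<and> Pnull r K h w a b (N6 c \<delta>) > 0 \<longrightarrow>
        non_hyperbolic (pp_field r K h w a b c \<delta>) (N6 c \<delta>, Pnull r K h w a b (N6 c \<delta>)))
   \<and> (b < (c / (2 * \<delta>))^2 \<and> Pnull r K h w a b (N4 b c \<delta>) > 0
        \<and> Pnull r K h w a b (N5 b c \<delta>) > 0 \<longrightarrow>
        unstable (pp_field r K h w a b c \<delta>) (N4 b c \<delta>, Pnull r K h w a b (N4 b c \<delta>))
        \<and> (Tr r K h w a b (N4 b c \<delta>) < 0 \<longrightarrow>
             saddle (pp_field r K h w a b c \<delta>) (N4 b c \<delta>, Pnull r K h w a b (N4 b c \<delta>)))
        \<and> (Tr r K h w a b (N5 b c \<delta>) < 0 \<longrightarrow>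
             loc_asymp_stable (pp_field r K h w a b c \<delta>) (N5 b c \<delta>, Pnull r K h w a b (N5 b c \<delta>))))"
  using part_i[OF assms(1-8)] part_ii[OF assms(1-8)] by blast

end
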